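(* Let $P=\{p_1<\dots<p_n\}\subset\mathbb{R}$ and let $S'$ be a finite set of intervals of $\mathbb{R}$, all of the same length and with no endpoint in $P$. If every point of $P$ lies in some interval of $S'$ and for every $1\le i<n$ the points $p_i,p_{i+1}$ have different codes $\{s\in S':p\in s\}$, then all points of $P$ have pairwise different codes with respect to $S'$ (so $S'$ is a discriminating code of $P$).
   Context: The code of a point $p$ with respect to a set $S'$ of intervals is $\{s\in S': p\in s\}$. A discriminating code of $P$ is a set of objects such that every point of $P$ has a nonempty code and distinct points have distinct codes. *)

theory Defs
  imports Complex_Main
begin

definition code :: "'a set set \<Rightarrow> 'a \<Rightarrow> 'a set set" where
  "code S p = {s \<in> S. p \<in> s}"

definition discriminating_code :: "'a set set \<Rightarrow> 'a set \<Rightarrow> bool" where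
  "discriminating_code S P \<longleftrightarrow>
     (\<forall>p\<in>P. code S p \<noteq> {}) \<and> (\<forall>p\<in>P. \<forall>q\<in>P. p \<noteq> q \<longrightarrow> code S p \<noteq> code S q)"

end

theory Submission
  imports Defs
begin

lemma key:
  fixes P :: "real set" and S :: "real set set" and L :: real
  assumes fin: "finite P"
    and iv: "\<forall>s\<in>S. \<exists>a. s = {a..a + L} \<and> a \<notin> P \<and> a + L \<notin> P"
    and ne: "\<forall>p\<in>P. code S p \<noteq> {}"
    and cons: "\<forall>p\<in>P. \<forall>q\<in>P. p < q \<and> \<not> (\<exists>r\<in>P. p < r \<and> r < q) \<longrightarrow> code S p \<noteq> code S q"
    and pP: "p \<in> P" and qP: "q \<in> P" and pq: "p < q"
  shows "code S p \<noteq> code S q"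
proof
  assume eq: "code S p = code S q"
  define R where "R = {r\<in>P. p < r \<and> r \<le> q}"
  have Rf: "finite R" "R \<noteq> {}" using fin qP pq by (auto simp: R_def)
  define r1 where "r1 = Min R"
  have r1R: "r1 \<in> R" using Rf r1_def by simp
  have r1min: "\<And>r. r \<in> R \<Longrightarrow> r1 \<le> r" using Rf r1_def by simp
  have r1P: "r1 \<in> P" and pr1: "p < r1" and r1q: "r1 \<le> q" using r1R by (auto simp: R_def)
  have nob: "\<not> (\<exists>r\<in>P. p < r \<and> r < r1)"
  proof
    assume "\<exists>r\<in>P. p < r \<and> r < r1"
    then obtain r where "r \<in> P" "p < r" "r < r1" by blast
    hence "r \<in> R" using r1q by (auto simp: R_def)
    thus False using r1min \<open>r < r1\<close> by fastforce
  qed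
  have dif: "code S p \<noteq> code S r1" using cons pP r1P pr1 nob by blast
  have sub: "code S p \<subseteq> code S r1"
  proof
    fix s assume "s \<in> code S p"
    hence sS: "s \<in> S" and ps: "p \<in> s" by (auto simp: code_def)
    have "s \<in> code S q" using eq \<open>s \<in> code S p\<close> by simp
    hence qs: "q \<in> s" by (auto simp: code_def)
    obtain a where "s = {a..a+L}" using iv sS by blast
    thus "s \<in> code S r1" using ps qs pr1 r1q sS by (auto simp: code_def)
  qed
  then obtain s where sr1: "s \<in> code S r1" and nsp: "s \<notin> code S p" using dif by blast
  hence sS: "s \<in> S" and r1s: "r1 \<in> s" and ps: "p \<notin> s" by (auto simp: code_def)
  have qs: "q \<notin> s" using eq nsp sS by (auto simp: code_def)
  obtain a where sa: "s = {a..a+L}" using iv sS by blast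
  have "p < a" using sa r1s ps pr1 by auto
  have "a + L < q" using sa r1s qs r1q by auto
  obtain t where tc: "t \<in> code S p" using ne pP by blast
  hence tS: "t \<in> S" and pt: "p \<in> t" by (auto simp: code_def)
  have qt: "q \<in> t" using tc eq by (auto simp: code_def)
  obtain b where tb: "t = {b..b+L}" using iv tS by blast
  show False using tb pt qt \<open>p < a\<close> \<open>a + L < q\<close> by auto
qed

theorem mainTheorem8:
  fixes P :: "real set" and S :: "real set set" and L :: real
  assumes "finite P"
    and "finite S"
    and "\<forall>s\<in>S. \<exists>a. s = {a..a + L} \<and> a \<notin> P \<and> a + L \<notin> P"
    and "\<forall>p\<in>P. code S p \<noteq> {}"
    and "\<forall>p\<in>P. \<forall>q\<in>P. p < q \<and> \<not> (\<exists>r\<in>P. p < r \<and> r < q) \<longrightarrow> code S p \<noteq> code S q"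
  shows "discriminating_code S P"
  unfolding discriminating_code_def
proof (intro conjI ballI impI)
  fix p assume "p \<in> P" thus "code S p \<noteq> {}" using assms(4) by blast
next
  fix p q assume "p \<in> P" "q \<in> P" "p \<noteq> q"
  show "code S p \<noteq> code S q"
  proof (cases "p < q")
    case True thus ?thesis using key[OF assms(1,3,4,5)] \<open>p \<in> P\<close> \<open>q \<in> P\<close> by blast
  next
    case False hence "q < p" using \<open>p \<noteq> q\<close> by auto
    thus ?thesis using key[OF assms(1,3,4,5)] \<open>p \<in> P\<close> \<open>q \<in> P\<close> by metis
  qed
qed

end
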